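(* Let $(Z_n)_{n\ge0}$ be a Galton–Watson process with $Z_0=1$ whose offspring variable $\xi$ has mean $\mu<1$ and satisfies $\mathbf{E}[\xi^{1+\epsilon}]<\infty$ for some $\epsilon>0$. Suppose $1<\beta<\mu^{-1}$. Then there exists $\kappa>0$ such that for all $\delta\in(0,\kappa)$ the process $((Z_n\beta^n)^{1+\delta})_{n\ge0}$ is a supermartingale with respect to the natural filtration $\mathcal{F}_n=\sigma(Z_k;k\le n)$. *)

theory Defs
  imports "HOL-Probability.Probability"
begin

text \<open>Galton-Watson process driven by offspring variables X n i
  (number of children of the i-th individual of generation n), with Z 0 = 1.\<close>
fun gw_Z :: "(nat \<Rightarrow> nat \<Rightarrow> 'a \<Rightarrow> nat) \<Rightarrow> nat \<Rightarrow> 'a \<Rightarrow> nat" where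
  "gw_Z X 0 \<omega> = 1"
| "gw_Z X (Suc n) \<omega> = (\<Sum>i<gw_Z X n \<omega>. X n i \<omega>)"

definition natural_filtration :: "'a measure \<Rightarrow> (nat \<Rightarrow> 'a \<Rightarrow> nat) \<Rightarrow> nat \<Rightarrow> 'a measure" where
  "natural_filtration M Z n = sigma (space M) {Z k -` A \<inter> space M | k A. k \<le> n}"

definition supermartingale ::
  "'a measure \<Rightarrow> (nat \<Rightarrow> 'a measure) \<Rightarrow> (nat \<Rightarrow> 'a \<Rightarrow> real) \<Rightarrow> bool" where
  "supermartingale M F Y \<longleftrightarrow>
     (\<forall>n. subalgebra M (F n)) \<and>
     (\<forall>n m. n \<le> m \<longrightarrow> sets (F n) \<subseteq> sets (F m)) \<and>
     (\<forall>n. Y n \<in> borel_measurable (F n)) \<and>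
     (\<forall>n. integrable M (Y n)) \<and>
     (\<forall>n m. n \<le> m \<longrightarrow> (AE \<omega> in M. real_cond_exp M (F n) (Y m) \<omega> \<le> Y n \<omega>))"

end

theory Submission
  imports Defs
begin


lemma powr_convex0:
  assumes "p \<ge> 1" shows "convex_on {0..} (\<lambda>x::real. x powr p)"
proof (rule convex_onI)
  fix t x y :: real assume t: "0<t" "t<1" and xy: "x \<in> {0..}" "y \<in> {0..}"
  have tp: "s powr p \<le> s" if "0 < s" "s \<le> 1" for s :: real
  proof -
    have "s powr p \<le> s powr 1" using that assms by (intro powr_mono') auto
    then show ?thesis using that by simp
  qed
  consider "x > 0" "y > 0" | "x = 0" | "y = 0" using xy by fastforce
  then show "((1-t) *\<^sub>R x + t *\<^sub>R y) powr p \<le> (1-t) * x powr p + t * y powr p"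
  proof cases
    case 1 then show ?thesis using convex_onD[OF powr_convex[OF assms], of t x y] t by auto
  next
    case 2
    have "(t*y) powr p = t powr p * y powr p" using xy t by (simp add: powr_mult)
    also have "\<dots> \<le> t * y powr p" using tp[of t] t by (intro mult_right_mono) auto
    finally show ?thesis using 2 by simp
  next
    case 3
    have "((1-t)*x) powr p = (1-t) powr p * x powr p" using xy t by (simp add: powr_mult)
    also have "\<dots> \<le> (1-t) * x powr p" using tp[of "1-t"] t by (intro mult_right_mono) auto
    finally show ?thesis using 3 by simp
  qed
qed simp

lemma avg_powr:
  fixes a :: "nat \<Rightarrow> real"
  assumes "z \<ge> 1" "\<And>i. a i \<ge> 0" "p \<ge> 1"
  shows "((\<Sum>i<z. a i) / z) powr p \<le> (\<Sum>i<z. a i powr p) / z"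
proof -
  have "(\<lambda>x. x powr p) (\<Sum>i<z. (1 / real z) *\<^sub>R a i) \<le> (\<Sum>i<z. (1 / real z) * (\<lambda>x. x powr p) (a i))"
    by (rule convex_on_sum[OF _ _ powr_convex0[OF assms(3)]]) (use assms in \<open>auto simp: lessThan_empty_iff\<close>)
  then show ?thesis by (simp add: sum_distrib_left[symmetric] sum_divide_distrib[symmetric])
qed

lemma pw:
  fixes y T \<delta> \<epsilon> :: real
  assumes "y \<ge> 0" "T > 0" "0 \<le> \<delta>" "\<delta> \<le> \<epsilon>"
  shows "y powr (1+\<delta>) \<le> T powr \<delta> * y + T powr (\<delta>-\<epsilon>) * y powr (1+\<epsilon>)"
proof (cases "y = 0")
  case True then show ?thesis by simp
next
  case False
  then have y: "y > 0" using assms by simp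
  have nn: "0 \<le> T powr \<delta> * y" "0 \<le> T powr (\<delta>-\<epsilon>) * y powr (1+\<epsilon>)" using y by auto
  show ?thesis
  proof (cases "y \<le> T")
    case True
    have "y powr (1+\<delta>) = y * y powr \<delta>" using y by (simp add: powr_add)
    also have "\<dots> \<le> y * T powr \<delta>" using True y assms by (intro mult_left_mono powr_mono2) auto
    finally show ?thesis using nn by (smt (verit) mult.commute)
  next
    case False
    have "y powr (1+\<delta>) = y powr (1+\<epsilon>) * y powr (\<delta>-\<epsilon>)" using y by (simp add: powr_add[symmetric])
    also have "\<dots> \<le> y powr (1+\<epsilon>) * T powr (\<delta>-\<epsilon>)" using False y assms
      by (intro mult_left_mono powr_mono2') auto
    finally show ?thesis using nn by (smt (verit) mult.commute)
  qed
qed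



lemma gw_Z_dep:
  assumes "\<And>j i. j < k \<Longrightarrow> X j i \<omega> = Y j i \<omega>'"
  shows "gw_Z X k \<omega> = gw_Z Y k \<omega>'"
  using assms by (induction k) auto

definition Zv :: "nat \<Rightarrow> (nat \<times> nat \<Rightarrow> nat) \<Rightarrow> nat" where
  "Zv k v = gw_Z (\<lambda>k i v. v (k, i)) k v"

lemma Zv_simps[simp]: "Zv 0 v = 1" "Zv (Suc k) v = (\<Sum>i<Zv k v. v (k, i))"
  by (simp_all add: Zv_def)

definition J1 :: "nat \<Rightarrow> (nat \<times> nat) set" where "J1 n = {p. fst p < n}"
definition J2 :: "nat \<Rightarrow> (nat \<times> nat) set" where "J2 n = {p. fst p = n}"

lemma Zv_meas:
  "k \<le> n \<Longrightarrow> Zv k \<in> measurable (PiM (J1 n) (\<lambda>_. count_space UNIV)) (count_space UNIV)"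
proof (induction k)
  case 0 then show ?case by simp
next
  case (Suc k)
  have m: "(\<lambda>v. (\<Sum>i<z. v (k,i))::nat) \<in> measurable (PiM (J1 n) (\<lambda>_. count_space UNIV)) (count_space UNIV)" for z
  proof -
    have "\<And>i. (k,i) \<in> J1 n" using Suc.prems by (auto simp: J1_def)
    then show ?thesis by measurable
  qed
  have "(\<lambda>v. (\<lambda>z v. (\<Sum>i<z. v (k,i))::nat) (Zv k v) v) \<in> measurable (PiM (J1 n) (\<lambda>_. count_space UNIV)) (count_space UNIV)"
    by (rule measurable_compose_countable[OF m]) (use Suc in auto)
  then show ?case by simp
qed

locale gw = prob_space M for M :: "'a measure" +
  fixes X :: "nat \<Rightarrow> nat \<Rightarrow> 'a \<Rightarrow> nat" and xi :: "'a \<Rightarrow> nat"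
  assumes xi_meas[measurable]: "xi \<in> measurable M (count_space UNIV)"
    and indep: "indep_vars (\<lambda>_. count_space UNIV) (\<lambda>(n, i). X n i) UNIV"
    and distr_eq: "\<And>n i. distr M (count_space UNIV) (X n i) = distr M (count_space UNIV) xi"
begin

lemma X_meas[measurable]: "X n i \<in> measurable M (count_space UNIV)"
  using indep unfolding indep_vars_def by (metis (no_types, lifting) UNIV_I case_prod_conv)

lemma Z_meas[measurable]: "gw_Z X k \<in> measurable M (count_space UNIV)"
proof (induction k)
  case 0 then show ?case by simp
next
  case (Suc k)
  have "(\<lambda>\<omega>. (\<lambda>z \<omega>. (\<Sum>i<z. X k i \<omega>)) (gw_Z X k \<omega>) \<omega>) \<in> measurable M (count_space UNIV)"
    by (rule measurable_compose_countable[OF _ Suc]) measurable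
  then show ?case by simp
qed

definition V1 :: "nat \<Rightarrow> 'a \<Rightarrow> (nat \<times> nat \<Rightarrow> nat)" where
  "V1 n \<omega> = restrict (\<lambda>i. (\<lambda>(n, i). X n i) i \<omega>) (J1 n)"
definition V2 :: "nat \<Rightarrow> 'a \<Rightarrow> (nat \<times> nat \<Rightarrow> nat)" where
  "V2 n \<omega> = restrict (\<lambda>i. (\<lambda>(n, i). X n i) i \<omega>) (J2 n)"

lemma indep12: "indep_var (PiM (J1 n) (\<lambda>_. count_space UNIV)) (V1 n) (PiM (J2 n) (\<lambda>_. count_space UNIV)) (V2 n)"
  unfolding V1_def V2_def
  by (rule indep_var_restrict[OF indep]) (auto simp: J1_def J2_def)

lemma V1_meas[measurable]: "V1 n \<in> measurable M (PiM (J1 n) (\<lambda>_. count_space UNIV))"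
  unfolding V1_def by (rule measurable_restrict) (auto split: prod.splits)
lemma V2_meas[measurable]: "V2 n \<in> measurable M (PiM (J2 n) (\<lambda>_. count_space UNIV))"
  unfolding V2_def by (rule measurable_restrict) (auto split: prod.splits)

lemma Z_V1: "k \<le> n \<Longrightarrow> gw_Z X k \<omega> = Zv k (V1 n \<omega>)"
  unfolding Zv_def by (rule gw_Z_dep) (auto simp: V1_def J1_def)

lemma V2_app: "V2 n \<omega> (n, i) = X n i \<omega>"
  by (simp add: V2_def J2_def)

abbreviation F where "F n \<equiv> natural_filtration M (gw_Z X) n"

definition gens where "gens n = {gw_Z X k -` A \<inter> space M | k A. k \<le> n}"

lemma gens_sets: "gens n \<subseteq> sets M"
  unfolding gens_def by auto

lemma sets_F: "sets (F n) = sigma_sets (space M) (gens n)"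
  unfolding natural_filtration_def gens_def[symmetric]
  by (rule sets_measure_of) (use gens_sets sets.sets_into_space in blast)

lemma space_F[simp]: "space (F n) = space M"
  unfolding natural_filtration_def by (simp add: space_measure_of_conv)

lemma subalg: "subalgebra M (F n)"
  using sets.sigma_sets_subset[OF gens_sets] space_F by (auto simp: subalgebra_def sets_F)

lemma F_mono: "n \<le> m \<Longrightarrow> sets (F n) \<subseteq> sets (F m)"
  unfolding sets_F by (rule sigma_sets_mono') (fastforce simp: gens_def)

lemma Z_F_meas: "gw_Z X n \<in> measurable (F n) (count_space UNIV)"
  unfolding measurable_count_space_eq2_countable
proof safe
  fix a :: nat
  have "gw_Z X n -` {a} \<inter> space M \<in> gens n" unfolding gens_def by blast
  then show "gw_Z X n -` {a} \<inter> space (F n) \<in> sets (F n)"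
    unfolding sets_F space_F by (rule sigma_sets.Basic)
qed auto

lemma F_V1:
  assumes "A \<in> sets (F n)"
  shows "\<exists>E \<in> sets (PiM (J1 n) (\<lambda>_. count_space UNIV)). A = V1 n -` E \<inter> space M"
proof -
  let ?P = "PiM (J1 n) (\<lambda>_. count_space UNIV)"
  let ?V = "vimage_algebra (space M) (V1 n) ?P"
  have fs: "V1 n \<in> space M \<rightarrow> space ?P" using measurable_space[OF V1_meas] by auto
  have "gens n \<subseteq> sets ?V"
  proof
    fix S assume "S \<in> gens n"
    then obtain k B where kB: "k \<le> n" "S = gw_Z X k -` B \<inter> space M" unfolding gens_def by blast
    have "S = V1 n -` (Zv k -` B \<inter> space ?P) \<inter> space M"
      using kB fs Z_V1[OF kB(1)] by auto
    moreover have "Zv k -` B \<inter> space ?P \<in> sets ?P"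
      using Zv_meas[OF kB(1)] by (auto simp: measurable_def)
    ultimately show "S \<in> sets ?V" unfolding sets_vimage_algebra2[OF fs] by blast
  qed
  then have "sigma_sets (space M) (gens n) \<subseteq> sets ?V"
    using sets.sigma_sets_subset[of "gens n" ?V] by simp
  then have "A \<in> sets ?V" using assms sets_F by blast
  then show ?thesis unfolding sets_vimage_algebra2[OF fs] by blast
qed

lemma indep_prod:
  assumes A: "A \<in> sets (F n)"
    and h[measurable]: "h \<in> borel_measurable (PiM (J2 n) (\<lambda>_. count_space UNIV))"
    and hpos: "\<And>v. h v \<ge> 0"
  shows "(\<integral>\<^sup>+\<omega>. ennreal (indicator A \<omega> * h (V2 n \<omega>)) \<partial>M) = emeasure M A * (\<integral>\<^sup>+\<omega>. ennreal (h (V2 n \<omega>)) \<partial>M)"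
proof -
  obtain E where E: "E \<in> sets (PiM (J1 n) (\<lambda>_. count_space UNIV))" "A = V1 n -` E \<inter> space M"
    using F_V1[OF A] by blast
  have AM: "A \<in> sets M" using E by simp
  have iv: "indep_var borel ((\<lambda>v. ennreal (indicator E v)) \<circ> V1 n) borel ((\<lambda>v. ennreal (h v)) \<circ> V2 n)"
    by (rule indep_var_compose[OF indep12]) (use E in auto)
  define G where "G = (\<lambda>b. case b of True \<Rightarrow> (\<lambda>v. ennreal (indicator E v)) \<circ> V1 n | False \<Rightarrow> (\<lambda>v. ennreal (h v)) \<circ> V2 n)"
  have **: "(\<lambda> _. borel) = case_bool borel borel"
    by (rule ext, metis (full_types) bool.simps(3) bool.simps(4))
  have ivs: "indep_vars (\<lambda>_. borel) G UNIV"
    using iv unfolding indep_var_def G_def by (subst **) simp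
  have "(\<integral>\<^sup>+\<omega>. (\<Prod>i\<in>UNIV. G i \<omega>) \<partial>M) = (\<Prod>i\<in>UNIV. \<integral>\<^sup>+\<omega>. G i \<omega> \<partial>M)"
    by (rule indep_vars_nn_integral) (use ivs in auto)
  moreover have "(\<integral>\<^sup>+\<omega>. (\<Prod>i\<in>UNIV. G i \<omega>) \<partial>M) = (\<integral>\<^sup>+\<omega>. ennreal (indicator A \<omega> * h (V2 n \<omega>)) \<partial>M)"
    by (rule nn_integral_cong) (auto simp: G_def UNIV_bool E(2) indicator_def)
  moreover have "(\<integral>\<^sup>+\<omega>. G True \<omega> \<partial>M) = emeasure M A"
  proof -
    have "(\<integral>\<^sup>+\<omega>. G True \<omega> \<partial>M) = (\<integral>\<^sup>+\<omega>. indicator A \<omega> \<partial>M)"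
      by (rule nn_integral_cong) (auto simp: G_def E(2) indicator_def)
    then show ?thesis using AM by simp
  qed
  moreover have "(\<integral>\<^sup>+\<omega>. G False \<omega> \<partial>M) = (\<integral>\<^sup>+\<omega>. ennreal (h (V2 n \<omega>)) \<partial>M)"
    by (simp add: G_def)
  ultimately show ?thesis by (simp add: UNIV_bool mult.commute)
qed


lemma transfer_int:
  fixes g :: "nat \<Rightarrow> real"
  shows "integrable M (\<lambda>\<omega>. g (X n i \<omega>)) \<longleftrightarrow> integrable M (\<lambda>\<omega>. g (xi \<omega>))"
    and "(\<integral>\<omega>. g (X n i \<omega>) \<partial>M) = (\<integral>\<omega>. g (xi \<omega>) \<partial>M)"
proof -
  show "integrable M (\<lambda>\<omega>. g (X n i \<omega>)) \<longleftrightarrow> integrable M (\<lambda>\<omega>. g (xi \<omega>))"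
    using integrable_distr_eq[of "X n i" M "count_space UNIV" g] integrable_distr_eq[of xi M "count_space UNIV" g]
      distr_eq[of n i] by simp
  show "(\<integral>\<omega>. g (X n i \<omega>) \<partial>M) = (\<integral>\<omega>. g (xi \<omega>) \<partial>M)"
    using integral_distr[of "X n i" M "count_space UNIV" g] integral_distr[of xi M "count_space UNIV" g]
      distr_eq[of n i] by simp
qed

lemma Sz_bound:
  assumes int1: "integrable M (\<lambda>\<omega>. real (xi \<omega>))"
    and int2: "integrable M (\<lambda>\<omega>. real (xi \<omega>) powr (1+\<epsilon>))"
    and z: "z \<ge> 1" and T: "T > 0" and d: "0 \<le> \<delta>" "\<delta> \<le> \<epsilon>"
  shows "(\<integral>\<^sup>+\<omega>. ennreal ((real (\<Sum>i<z. X n i \<omega>) / z) powr (1+\<delta>)) \<partial>M)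
     \<le> ennreal (T powr \<delta> * expectation (\<lambda>\<omega>. real (xi \<omega>)) + T powr (\<delta>-\<epsilon>) * expectation (\<lambda>\<omega>. real (xi \<omega>) powr (1+\<epsilon>)))"
proof -
  define B where "B \<omega> = T powr \<delta> * ((\<Sum>i<z. real (X n i \<omega>)) / z) + T powr (\<delta>-\<epsilon>) * ((\<Sum>i<z. real (X n i \<omega>) powr (1+\<epsilon>)) / z)" for \<omega>
  have i1: "integrable M (\<lambda>\<omega>. real (X n i \<omega>))" for i using transfer_int(1)[of real n i] int1 by simp
  have i2: "integrable M (\<lambda>\<omega>. real (X n i \<omega>) powr (1+\<epsilon>))" for i
    using transfer_int(1)[of "\<lambda>k. real k powr (1+\<epsilon>)" n i] int2 by simp
  have e1: "(\<integral>\<omega>. real (X n i \<omega>) \<partial>M) = expectation (\<lambda>\<omega>. real (xi \<omega>))" for i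
    using transfer_int(2)[of real n i] by simp
  have e2: "(\<integral>\<omega>. real (X n i \<omega>) powr (1+\<epsilon>) \<partial>M) = expectation (\<lambda>\<omega>. real (xi \<omega>) powr (1+\<epsilon>))" for i
    using transfer_int(2)[of "\<lambda>k. real k powr (1+\<epsilon>)" n i] by simp
  have iB: "integrable M B" unfolding B_def using i1 i2 by auto
  have eB: "(\<integral>\<omega>. B \<omega> \<partial>M) = T powr \<delta> * expectation (\<lambda>\<omega>. real (xi \<omega>)) + T powr (\<delta>-\<epsilon>) * expectation (\<lambda>\<omega>. real (xi \<omega>) powr (1+\<epsilon>))"
    unfolding B_def using i1 i2 z by (simp add: integral_add integral_sum e1 e2)
  have pwB: "(real (\<Sum>i<z. X n i \<omega>) / z) powr (1+\<delta>) \<le> B \<omega>" for \<omega>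
  proof -
    let ?y = "(\<Sum>i<z. real (X n i \<omega>)) / z"
    have y0: "0 \<le> ?y" by (intro divide_nonneg_nonneg sum_nonneg) auto
    have h1: "?y powr (1+\<delta>) \<le> T powr \<delta> * ?y + T powr (\<delta>-\<epsilon>) * ?y powr (1+\<epsilon>)"
      by (rule pw[OF y0 T d(1) d(2)])
    have h2: "?y powr (1+\<epsilon>) \<le> (\<Sum>i<z. real (X n i \<omega>) powr (1+\<epsilon>)) / z"
      by (rule avg_powr) (use z d in auto)
    have h3: "T powr (\<delta>-\<epsilon>) * ?y powr (1+\<epsilon>) \<le> T powr (\<delta>-\<epsilon>) * ((\<Sum>i<z. real (X n i \<omega>) powr (1+\<epsilon>)) / z)"
      by (rule mult_left_mono[OF h2 powr_ge_zero])
    have h4: "real (\<Sum>i<z. X n i \<omega>) / z = ?y" by simp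
    show ?thesis unfolding B_def h4 using h1 h3 by linarith
  qed
  have "(\<integral>\<^sup>+\<omega>. ennreal ((real (\<Sum>i<z. X n i \<omega>) / z) powr (1+\<delta>)) \<partial>M) \<le> (\<integral>\<^sup>+\<omega>. ennreal (B \<omega>) \<partial>M)"
    using pwB by (intro nn_integral_mono) (simp add: ennreal_leI)
  also have "\<dots> = ennreal (\<integral>\<omega>. B \<omega> \<partial>M)"
    using pwB by (intro nn_integral_eq_integral iB AE_I2) (meson order.trans powr_ge_zero)
  finally show ?thesis using eB by simp
qed

end


context gw begin

lemma onestep_nn:
  assumes A: "A \<in> sets (F n)" and \<beta>: "\<beta> > 0" and \<delta>: "\<delta> \<ge> 0"
    and bound: "\<And>z. z \<ge> 1 \<Longrightarrow> (\<integral>\<^sup>+\<omega>. ennreal ((real (\<Sum>i<z. X n i \<omega>) / z) powr (1+\<delta>)) \<partial>M) \<le> ennreal c"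
    and c: "\<beta> powr (1+\<delta>) * c \<le> 1" "c \<ge> 0"
  shows "(\<integral>\<^sup>+\<omega>. ennreal (indicator A \<omega> * (real (gw_Z X (Suc n) \<omega>) * \<beta> ^ Suc n) powr (1+\<delta>)) \<partial>M)
       \<le> (\<integral>\<^sup>+\<omega>. ennreal (indicator A \<omega> * (real (gw_Z X n \<omega>) * \<beta> ^ n) powr (1+\<delta>)) \<partial>M)"
proof -
  define Az where "Az z = A \<inter> (gw_Z X n -` {z} \<inter> space M)" for z
  have FAz: "Az z \<in> sets (F n)" for z
  proof -
    have "gw_Z X n -` {z} \<inter> space (F n) \<in> sets (F n)"
      by (rule measurable_sets[OF Z_F_meas]) simp
    then show ?thesis unfolding Az_def using A by auto
  qed
  have subF: "sets (F n) \<subseteq> sets M" using subalg unfolding subalgebra_def by auto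
  have MAz: "Az z \<in> sets M" for z using FAz subF by blast
  have AM: "A \<in> sets M" using A subF by blast
  define Y where "Y k \<omega> = (real (gw_Z X k \<omega>) * \<beta> ^ k) powr (1+\<delta>)" for k \<omega>
  have Ym[measurable]: "Y k \<in> borel_measurable M" for k unfolding Y_def by measurable
  have Y0: "Y k \<omega> \<ge> 0" for k \<omega> unfolding Y_def by simp
  have decomp: "(\<integral>\<^sup>+\<omega>. ennreal (indicator A \<omega> * Y k \<omega>) \<partial>M) = (\<Sum>z. \<integral>\<^sup>+\<omega>. ennreal (indicator (Az z) \<omega> * Y k \<omega>) \<partial>M)" for k
  proof -
    have "(\<integral>\<^sup>+\<omega>. ennreal (indicator A \<omega> * Y k \<omega>) \<partial>M) = (\<integral>\<^sup>+\<omega>. (\<Sum>z. ennreal (indicator (Az z) \<omega> * Y k \<omega>)) \<partial>M)"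
    proof (rule nn_integral_cong)
      fix \<omega> assume \<omega>: "\<omega> \<in> space M"
      have "(\<lambda>z. ennreal (indicator (Az z) \<omega> * Y k \<omega>)) = (\<lambda>z. if z = gw_Z X n \<omega> then ennreal (indicator A \<omega> * Y k \<omega>) else 0)"
        using \<omega> by (auto simp: Az_def indicator_def)
      then show "ennreal (indicator A \<omega> * Y k \<omega>) = (\<Sum>z. ennreal (indicator (Az z) \<omega> * Y k \<omega>))"
        using sums_unique[OF sums_single[of "gw_Z X n \<omega>" "\<lambda>_. ennreal (indicator A \<omega> * Y k \<omega>)"]] by simp
    qed
    also have "\<dots> = (\<Sum>z. \<integral>\<^sup>+\<omega>. ennreal (indicator (Az z) \<omega> * Y k \<omega>) \<partial>M)"
      by (rule nn_integral_suminf) (use MAz in measurable)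
    finally show ?thesis .
  qed
  have per_z: "(\<integral>\<^sup>+\<omega>. ennreal (indicator (Az z) \<omega> * Y (Suc n) \<omega>) \<partial>M) \<le> (\<integral>\<^sup>+\<omega>. ennreal (indicator (Az z) \<omega> * Y n \<omega>) \<partial>M)" for z
  proof -
    define h where "h v = (real (\<Sum>i<z. v (n, i)) * \<beta> ^ Suc n) powr (1+\<delta>)" for v :: "nat \<times> nat \<Rightarrow> nat"
    have hm: "h \<in> borel_measurable (PiM (J2 n) (\<lambda>_. count_space UNIV))"
    proof -
      have "\<And>i. (n, i) \<in> J2 n" by (simp add: J2_def)
      then show ?thesis unfolding h_def by measurable
    qed
    have "(\<integral>\<^sup>+\<omega>. ennreal (indicator (Az z) \<omega> * Y (Suc n) \<omega>) \<partial>M) = (\<integral>\<^sup>+\<omega>. ennreal (indicator (Az z) \<omega> * h (V2 n \<omega>)) \<partial>M)"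
      by (rule nn_integral_cong) (auto simp: Az_def indicator_def Y_def h_def V2_app)
    also have "\<dots> = emeasure M (Az z) * (\<integral>\<^sup>+\<omega>. ennreal (h (V2 n \<omega>)) \<partial>M)"
      by (rule indep_prod[OF FAz hm]) (simp add: h_def)
    also have "\<dots> \<le> emeasure M (Az z) * ennreal ((real z * \<beta> ^ n) powr (1+\<delta>))"
    proof (rule mult_left_mono)
      show "(\<integral>\<^sup>+\<omega>. ennreal (h (V2 n \<omega>)) \<partial>M) \<le> ennreal ((real z * \<beta> ^ n) powr (1+\<delta>))"
      proof (cases "z = 0")
        case True then show ?thesis by (simp add: h_def)
      next
        case False
        let ?C = "(real z * \<beta> ^ Suc n) powr (1+\<delta>)"
        have hV: "h (V2 n \<omega>) = ?C * (real (\<Sum>i<z. X n i \<omega>) / z) powr (1+\<delta>)" for \<omega>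
        proof -
          have eq: "real (\<Sum>i<z. V2 n \<omega> (n, i)) * \<beta> ^ Suc n = (real z * \<beta> ^ Suc n) * (real (\<Sum>i<z. X n i \<omega>) / z)"
            using False by (simp add: V2_app)
          have "h (V2 n \<omega>) = ((real z * \<beta> ^ Suc n) * (real (\<Sum>i<z. X n i \<omega>) / z)) powr (1+\<delta>)"
            unfolding h_def by (subst eq) (rule refl)
          then show ?thesis by (simp only: powr_mult)
        qed
        have "(\<integral>\<^sup>+\<omega>. ennreal (h (V2 n \<omega>)) \<partial>M) = ennreal ?C * (\<integral>\<^sup>+\<omega>. ennreal ((real (\<Sum>i<z. X n i \<omega>) / z) powr (1+\<delta>)) \<partial>M)"
          unfolding hV by (subst ennreal_mult) (auto intro!: nn_integral_cmult)
        also have "\<dots> \<le> ennreal ?C * ennreal c"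
          using bound[of z] False by (intro mult_left_mono) auto
        also have "\<dots> = ennreal (?C * c)" using c by (simp add: ennreal_mult)
        also have "?C * c \<le> (real z * \<beta> ^ n) powr (1+\<delta>)"
        proof -
          have "?C = (real z * \<beta> ^ n) powr (1+\<delta>) * \<beta> powr (1+\<delta>)"
            using \<beta> by (simp add: powr_mult[symmetric] mult_ac)
          then have "?C * c = (real z * \<beta> ^ n) powr (1+\<delta>) * (\<beta> powr (1+\<delta>) * c)" by simp
          also have "\<dots> \<le> (real z * \<beta> ^ n) powr (1+\<delta>) * 1"
            using c by (intro mult_left_mono) auto
          finally show ?thesis by simp
        qed
        then have "ennreal (?C * c) \<le> ennreal ((real z * \<beta> ^ n) powr (1+\<delta>))" by (rule ennreal_leI)
        finally show ?thesis .
      qed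
    qed simp
    also have "\<dots> = (\<integral>\<^sup>+\<omega>. ennreal (indicator (Az z) \<omega> * Y n \<omega>) \<partial>M)"
    proof -
      have "(\<integral>\<^sup>+\<omega>. ennreal (indicator (Az z) \<omega> * Y n \<omega>) \<partial>M) = (\<integral>\<^sup>+\<omega>. ennreal ((real z * \<beta> ^ n) powr (1+\<delta>)) * indicator (Az z) \<omega> \<partial>M)"
        by (rule nn_integral_cong) (auto simp: Az_def indicator_def Y_def)
      also have "\<dots> = ennreal ((real z * \<beta> ^ n) powr (1+\<delta>)) * emeasure M (Az z)"
        by (rule nn_integral_cmult_indicator[OF MAz])
      finally show ?thesis by (simp add: mult.commute)
    qed
    finally show ?thesis .
  qed
  show ?thesis
    using decomp[of "Suc n"] decomp[of n] per_z unfolding Y_def[symmetric]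
    by (simp add: suminf_le)
qed

end


lemma ce_le:
  assumes P: "prob_space M" and sub: "subalgebra M F" and fi[measurable]: "integrable M f" and gi: "integrable M g"
    and gm[measurable]: "g \<in> borel_measurable F"
    and le: "\<And>A. A \<in> sets F \<Longrightarrow> (\<integral>x. indicator A x * f x \<partial>M) \<le> (\<integral>x. indicator A x * g x \<partial>M)"
  shows "AE x in M. real_cond_exp M F f x \<le> g x"
proof -
  interpret prob_space M by (rule P)
  interpret finite_measure_subalgebra M F
    by unfold_locales (use sub in auto)
  let ?ce = "real_cond_exp M F f"
  have cem[measurable]: "?ce \<in> borel_measurable F" by simp
  define A where "A = {x \<in> space F. g x < ?ce x}"
  have AF: "A \<in> sets F" unfolding A_def by measurable
  have AM: "A \<in> sets M" using AF sub unfolding subalgebra_def by auto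
  have spF: "space F = space M" using sub unfolding subalgebra_def by auto
  have cei: "integrable M ?ce" by (rule real_cond_exp_int(1)[OF fi])
  have i1: "integrable M (\<lambda>x. indicator A x * ?ce x)" using integrable_mult_indicator[OF AM cei] by simp
  have i2: "integrable M (\<lambda>x. indicator A x * g x)" using integrable_mult_indicator[OF AM gi] by simp
  have "(\<integral>x. indicator A x * f x \<partial>M) = (\<integral>x. indicator A x * ?ce x \<partial>M)"
    using real_cond_exp_intA[OF fi AF] unfolding set_lebesgue_integral_def by simp
  then have "(\<integral>x. indicator A x * ?ce x \<partial>M) \<le> (\<integral>x. indicator A x * g x \<partial>M)" using le[OF AF] by simp
  then have int0: "(\<integral>x. indicator A x * (?ce x - g x) \<partial>M) \<le> 0"
    using i1 i2 by (simp add: right_diff_distrib)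
  have nn: "0 \<le> indicator A x * (?ce x - g x)" for x by (auto simp: A_def indicator_def)
  have i3: "integrable M (\<lambda>x. indicator A x * (?ce x - g x))"
    using i1 i2 by (simp add: right_diff_distrib)
  have "(\<integral>x. indicator A x * (?ce x - g x) \<partial>M) = 0"
  proof -
    have "0 \<le> (\<integral>x. indicator A x * (?ce x - g x) \<partial>M)" by (rule integral_nonneg_AE) (simp add: nn)
    then show ?thesis using int0 by linarith
  qed
  then have "AE x in M. indicator A x * (?ce x - g x) = 0"
    using integral_nonneg_eq_0_iff_AE[OF i3] nn by auto
  moreover have "AE x in M. x \<in> space M" by (rule AE_space)
  ultimately show ?thesis
    by eventually_elim (auto simp: A_def indicator_def spF split: if_splits)
qed

lemma choose_kappa:
  fixes \<beta> \<mu> K \<epsilon> :: real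
  assumes "\<beta> > 1" "\<beta>*\<mu> < 1" "\<mu> \<ge> 0" "K \<ge> 0" "\<epsilon> > 0"
  shows "\<exists>T>0. \<exists>\<kappa>>0. \<kappa> \<le> \<epsilon> \<and> (\<forall>\<delta>. 0<\<delta> \<and> \<delta><\<kappa> \<longrightarrow> \<beta> powr (1+\<delta>) * (T powr \<delta> * \<mu> + T powr (\<delta>-\<epsilon>) * K) < 1)"
proof -
  define r where "r = 1 - \<beta>*\<mu>"
  have r: "r > 0" using assms by (simp add: r_def)
  define c0 where "c0 = r / (2*\<beta>*(K+1))"
  have c0: "c0 > 0" using r assms by (simp add: c0_def)
  define T where "T = c0 powr (-1/\<epsilon>)"
  have T: "T > 0" using c0 by (simp add: T_def)
  have Te: "T powr (-\<epsilon>) = c0" using c0 assms by (simp add: T_def powr_powr)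
  define g where "g d = \<beta> powr (1+d) * (T powr d * \<mu> + T powr (d-\<epsilon>) * K)" for d
  have g0: "g 0 = \<beta> * (\<mu> + c0 * K)" using T Te assms by (simp add: g_def)
  have "\<beta> * (c0 * K) < r / 2"
  proof -
    have "\<beta> * (c0 * K) = (\<beta> / \<beta>) * (r * K / (2 * (K+1)))" by (simp add: c0_def)
    also have "\<dots> = r * K / (2 * (K+1))" using assms by simp
    also have "\<dots> < r / 2" using r assms by (simp add: field_simps)
    finally show ?thesis .
  qed
  then have g01: "g 0 < 1" using g0 r unfolding r_def by (simp add: distrib_left)
  have "(g \<longlongrightarrow> g 0) (at 0)"
    unfolding g_def using assms T by (intro tendsto_intros) auto
  then have "eventually (\<lambda>d. g d < 1) (at 0)" using g01 by (rule order_tendstoD(2))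
  then obtain d where d: "d > 0" "\<And>x. x \<noteq> 0 \<Longrightarrow> dist x 0 < d \<Longrightarrow> g x < 1"
    unfolding eventually_at by blast
  have "\<forall>\<delta>. 0<\<delta> \<and> \<delta><min d \<epsilon> \<longrightarrow> g \<delta> < 1" using d(2) by auto
  then show ?thesis using T d assms unfolding g_def
    by (intro exI[of _ T] conjI exI[of _ "min d \<epsilon>"]) auto
qed



context gw begin

lemma sfs: "sigma_finite_subalgebra M (F n)"
proof -
  interpret finite_measure_subalgebra M "F n"
    by (intro finite_measure_subalgebra.intro finite_measure_axioms) (simp add: finite_measure_subalgebra_axioms_def subalg)
  show ?thesis by (intro sigma_finite_subalgebra.intro subalg sigma_fin_subalg)
qed

lemma subsub: "n \<le> m \<Longrightarrow> subalgebra (F m) (F n)"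
  unfolding subalgebra_def using F_mono by auto

theorem main:
  assumes int1: "integrable M (\<lambda>\<omega>. real (xi \<omega>))" and int2: "integrable M (\<lambda>\<omega>. real (xi \<omega>) powr (1+\<epsilon>))"
    and \<epsilon>: "\<epsilon> > 0" and \<beta>: "1 < \<beta>" "\<beta> * expectation (\<lambda>\<omega>. real (xi \<omega>)) < 1"
  shows "\<exists>\<kappa>>0. \<forall>\<delta>. 0 < \<delta> \<and> \<delta> < \<kappa> \<longrightarrow>
           supermartingale M (natural_filtration M (gw_Z X)) (\<lambda>n \<omega>. (real (gw_Z X n \<omega>) * \<beta> ^ n) powr (1 + \<delta>))"
proof -
  let ?\<mu> = "expectation (\<lambda>\<omega>. real (xi \<omega>))"
  let ?K = "expectation (\<lambda>\<omega>. real (xi \<omega>) powr (1+\<epsilon>))"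
  have \<mu>0: "?\<mu> \<ge> 0" by (rule integral_nonneg_AE) simp
  have K0: "?K \<ge> 0" by (rule integral_nonneg_AE) simp
  obtain T \<kappa> where T: "T > 0" and \<kappa>: "\<kappa> > 0" "\<kappa> \<le> \<epsilon>"
    and H: "\<forall>\<delta>. 0<\<delta> \<and> \<delta><\<kappa> \<longrightarrow> \<beta> powr (1+\<delta>) * (T powr \<delta> * ?\<mu> + T powr (\<delta>-\<epsilon>) * ?K) < 1"
    using choose_kappa[OF \<beta>(1) \<beta>(2) \<mu>0 K0 \<epsilon>] by blast
  show ?thesis
  proof (intro exI[of _ \<kappa>] conjI allI impI)
    show "\<kappa> > 0" by (rule \<kappa>)
    fix \<delta> :: real assume \<delta>: "0 < \<delta> \<and> \<delta> < \<kappa>"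
    define c where "c = T powr \<delta> * ?\<mu> + T powr (\<delta>-\<epsilon>) * ?K"
    have c0: "c \<ge> 0" unfolding c_def using \<mu>0 K0 by simp
    have cb: "\<beta> powr (1+\<delta>) * c \<le> 1" using H \<delta> by (simp add: c_def less_imp_le)
    have bound: "(\<integral>\<^sup>+\<omega>. ennreal ((real (\<Sum>i<z. X n i \<omega>) / z) powr (1+\<delta>)) \<partial>M) \<le> ennreal c" if "z \<ge> 1" for n z
      unfolding c_def by (rule Sz_bound[OF int1 int2 that T]) (use \<delta> \<kappa> in auto)
    define Y where "Y n \<omega> = (real (gw_Z X n \<omega>) * \<beta> ^ n) powr (1+\<delta>)" for n \<omega>
    have Ym[measurable]: "Y n \<in> borel_measurable M" for n unfolding Y_def by measurable
    have YF: "Y n \<in> borel_measurable (F n)" for n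
    proof -
      have "(\<lambda>\<omega>. (\<lambda>k. (real k * \<beta> ^ n) powr (1+\<delta>)) (gw_Z X n \<omega>)) \<in> borel_measurable (F n)"
        by (rule measurable_compose[OF Z_F_meas]) simp
      then show ?thesis unfolding Y_def by simp
    qed
    have Y0: "0 \<le> Y n \<omega>" for n \<omega> unfolding Y_def by simp
    have one: "(\<integral>\<^sup>+\<omega>. ennreal (indicator A \<omega> * Y (Suc n) \<omega>) \<partial>M) \<le> (\<integral>\<^sup>+\<omega>. ennreal (indicator A \<omega> * Y n \<omega>) \<partial>M)"
      if "A \<in> sets (F n)" for A n
      unfolding Y_def by (rule onestep_nn[OF that _ _ bound cb c0]) (use \<beta> \<delta> in auto)
    have spF: "space M \<in> sets (F n)" for n using sets.top[of "F n"] by simp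
    have nnY: "(\<integral>\<^sup>+\<omega>. ennreal (Y n \<omega>) \<partial>M) \<le> 1" for n
    proof (induction n)
      case 0
      have "(\<integral>\<^sup>+\<omega>. ennreal (Y 0 \<omega>) \<partial>M) = (\<integral>\<^sup>+\<omega>. 1 \<partial>M)" by (simp add: Y_def)
      then show ?case by (simp add: emeasure_space_1)
    next
      case (Suc n)
      have eq: "(\<integral>\<^sup>+\<omega>. ennreal (indicator (space M) \<omega> * Y k \<omega>) \<partial>M) = (\<integral>\<^sup>+\<omega>. ennreal (Y k \<omega>) \<partial>M)" for k
        by (rule nn_integral_cong) simp
      show ?case using one[OF spF[of n]] Suc unfolding eq by simp
    qed
    have Yint: "integrable M (Y n)" for n
      by (rule integrableI_nonneg) (use Y0 nnY[of n] in \<open>auto simp: top.not_eq_extremum intro: le_less_trans\<close>)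
    have real_one: "(\<integral>\<omega>. indicator A \<omega> * Y (Suc n) \<omega> \<partial>M) \<le> (\<integral>\<omega>. indicator A \<omega> * Y n \<omega> \<partial>M)"
      if A: "A \<in> sets (F n)" for A n
    proof -
      have AM: "A \<in> sets M" using A subalg[of n] unfolding subalgebra_def by auto
      have ii: "integrable M (\<lambda>\<omega>. indicator A \<omega> * Y k \<omega>)" for k
        using integrable_mult_indicator[OF AM Yint[of k]] by simp
      have ee: "(\<integral>\<^sup>+\<omega>. ennreal (indicator A \<omega> * Y k \<omega>) \<partial>M) = ennreal (\<integral>\<omega>. indicator A \<omega> * Y k \<omega> \<partial>M)" for k
        by (rule nn_integral_eq_integral[OF ii]) (simp add: Y0)
      have nn: "0 \<le> (\<integral>\<omega>. indicator A \<omega> * Y n \<omega> \<partial>M)" by (rule integral_nonneg_AE) (simp add: Y0)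
      show ?thesis using one[OF A] unfolding ee using ennreal_le_iff[OF nn] by simp
    qed
    have step: "AE \<omega> in M. real_cond_exp M (F n) (Y (Suc n)) \<omega> \<le> Y n \<omega>" for n
      by (rule ce_le[OF prob_space_axioms subalg Yint Yint YF real_one])
    have multi: "n \<le> m \<Longrightarrow> AE \<omega> in M. real_cond_exp M (F n) (Y m) \<omega> \<le> Y n \<omega>" for n m
    proof (induction m)
      case 0
      then show ?case using sigma_finite_subalgebra.real_cond_exp_F_meas[OF sfs Yint YF, of 0] by auto
    next
      case (Suc m)
      show ?case
      proof (cases "n = Suc m")
        case True
        then show ?thesis using sigma_finite_subalgebra.real_cond_exp_F_meas[OF sfs Yint YF, of n] by auto
      next
        case False
        then have nm: "n \<le> m" using Suc.prems by simp
        have a1: "AE \<omega> in M. real_cond_exp M (F n) (real_cond_exp M (F m) (Y (Suc m))) \<omega> = real_cond_exp M (F n) (Y (Suc m)) \<omega>"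
          by (rule sigma_finite_subalgebra.real_cond_exp_nested_subalg[OF sfs subalg subsub[OF nm] Yint])
        have a2: "AE \<omega> in M. real_cond_exp M (F n) (real_cond_exp M (F m) (Y (Suc m))) \<omega> \<le> real_cond_exp M (F n) (Y m) \<omega>"
          by (rule sigma_finite_subalgebra.real_cond_exp_mono[OF sfs step])
             (auto intro: sigma_finite_subalgebra.real_cond_exp_int(1)[OF sfs] Yint)
        have a3: "AE \<omega> in M. real_cond_exp M (F n) (Y m) \<omega> \<le> Y n \<omega>" by (rule Suc.IH[OF nm])
        from a1 a2 a3 show ?thesis by eventually_elim simp
      qed
    qed
    show "supermartingale M (natural_filtration M (gw_Z X)) (\<lambda>n \<omega>. (real (gw_Z X n \<omega>) * \<beta> ^ n) powr (1 + \<delta>))"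
      unfolding supermartingale_def Y_def[symmetric]
      using subalg F_mono YF Yint multi by blast
  qed
qed

end

theorem lemma6p1:
  fixes M :: "'a measure" and X :: "nat \<Rightarrow> nat \<Rightarrow> 'a \<Rightarrow> nat" and xi :: "'a \<Rightarrow> nat"
    and \<mu> \<epsilon> \<beta> :: real
  assumes "prob_space M"
    and "xi \<in> measurable M (count_space UNIV)"
    and "prob_space.indep_vars M (\<lambda>_. count_space UNIV) (\<lambda>(n, i). X n i) UNIV"
    and "\<And>n i. distr M (count_space UNIV) (X n i) = distr M (count_space UNIV) xi"
    and "integrable M (\<lambda>\<omega>. real (xi \<omega>))"
    and "\<mu> = prob_space.expectation M (\<lambda>\<omega>. real (xi \<omega>))"
    and "\<mu> < 1"
    and "\<epsilon> > 0"
    and "integrable M (\<lambda>\<omega>. real (xi \<omega>) powr (1 + \<epsilon>))"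
    and "1 < \<beta>" and "\<beta> * \<mu> < 1"
  shows "\<exists>\<kappa>>0. \<forall>\<delta>. 0 < \<delta> \<and> \<delta> < \<kappa> \<longrightarrow>
           supermartingale M (natural_filtration M (gw_Z X))
             (\<lambda>n \<omega>. (real (gw_Z X n \<omega>) * \<beta> ^ n) powr (1 + \<delta>))"
  proof -
  interpret gw M X xi
    by (intro gw.intro gw_axioms.intro) (use assms in auto)
  show ?thesis using main[OF assms(5) assms(9) assms(8) assms(10)] assms(6) assms(11) by simp
qed

end
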